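(* In the coalition formation game above, every improvement path under the Marginal Utility order is finite. That is, there is no infinite sequence of profiles $s^{(0)},s^{(1)},s^{(2)},\dots$ such that for each $k$, $s^{(k+1)}$ is obtained from $s^{(k)}$ by a single UAV $j$ switching from task $s^{(k)}_j$ to a task $t\ne s^{(k)}_j$ with $C_t(s^{(k)})\cup\{j\}\succ_j C_{s^{(k)}_j}(s^{(k)})$. In particular, any procedure (such as the paper's MUCFC-CFG algorithm) that changes the partition only by such strictly improving unilateral switches makes finitely many changes, and if it stops only when no such switch exists, it terminates at a stable coalition partition.
   Context: $\mathcal M=\{1,\dots,M\}$ is a finite set of tasks and $\mathcal N=\{1,\dots,N\}$ a finite set of UAVs; a profile $s=(s_1,\dots,s_N)\in\mathcal M^N$ assigns task $s_j$ to UAV $j$ and induces coalitions $C_i(s)=\{j: s_j=i\}$. For each task $i$, $V_i$ is a real-valued characteristic function on subsets of $\mathcal N$ with $V_i(\emptyset)=0$. Shapley value of $j\in C$ for a coalition $C$ executing task $i$: $u_j(C)=\sum_{C'\subseteq C\setminus\{j\}}\frac{|C'|!(|C|-|C'|-1)!}{|C|!}[V_i(C'\cup\{j\})-V_i(C')]$. Marginal Utility order: for $j\in C$, $\mathrm{MU}_j(C)=u_j(C)+\sum_{g\in C\setminus\{j\}}[u_g(C)-u_g(C\setminus\{j\})]$ (Shapley values computed w.r.t. the task executed by $C$), and $C_k\succ_j C_l$ iff $\mathrm{MU}_j(C_k)>\mathrm{MU}_j(C_l)$. A partition is stable if no UAV $j$ and task $t\ne s_j$ satisfy $C_t\cup\{j\}\succ_j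 C_{s_j}$. *)

theory Defs
  imports Complex_Main "HOL-Library.FuncSet"
begin

text \<open>Tasks are 1..M, UAVs are 1..N. A profile assigns a task to every UAV
 (extensional function, undefined outside 1..N). V i is the characteristic
 function of task i.\<close>

definition profiles :: "nat \<Rightarrow> nat \<Rightarrow> (nat \<Rightarrow> nat) set" where
  "profiles M N = {1..N} \<rightarrow>\<^sub>E {1..M}"

definition coalition :: "nat \<Rightarrow> (nat \<Rightarrow> nat) \<Rightarrow> nat \<Rightarrow> nat set" where
  "coalition N s i = {j \<in> {1..N}. s j = i}"

definition shapley :: "(nat \<Rightarrow> nat set \<Rightarrow> real) \<Rightarrow> nat \<Rightarrow> nat set \<Rightarrow> nat \<Rightarrow> real" where
  "shapley V i C j =
     (\<Sum>C'\<in>Pow (C - {j}).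
        (fact (card C') * fact (card C - card C' - 1) / fact (card C))
        * (V i (C' \<union> {j}) - V i C'))"

definition MU :: "(nat \<Rightarrow> nat set \<Rightarrow> real) \<Rightarrow> nat \<Rightarrow> nat set \<Rightarrow> nat \<Rightarrow> real" where
  "MU V i C j = shapley V i C j
     + (\<Sum>g\<in>C - {j}. shapley V i C g - shapley V i (C - {j}) g)"

definition improving_switch ::
  "nat \<Rightarrow> nat \<Rightarrow> (nat \<Rightarrow> nat set \<Rightarrow> real) \<Rightarrow> (nat \<Rightarrow> nat) \<Rightarrow> (nat \<Rightarrow> nat) \<Rightarrow> bool" where
  "improving_switch M N V s s' \<longleftrightarrow>
     (\<exists>j\<in>{1..N}. \<exists>t\<in>{1..M}. t \<noteq> s j \<and> s' = s(j := t) \<and>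
        MU V t (coalition N s t \<union> {j}) j > MU V (s j) (coalition N s (s j)) j)"

end

theory Submission
  imports Defs
begin

lemma shapley_eff:
  assumes fin: "finite C"
  shows "(\<Sum>j\<in>C. shapley V i C j) = V i C - V i {}"
proof (cases "C = {}")
  case True then show ?thesis by simp
next
  case False
  define n where "n = card C"
  have n1: "n \<ge> 1" using False fin n_def by (simp add: Suc_le_eq card_gt_0_iff)
  define c :: "nat \<Rightarrow> real" where "c k = fact k * fact (n - k - 1) / fact n" for k
  have A: "shapley V i C j = (\<Sum>S\<in>Pow(C-{j}). c (card S) * V i (insert j S))
              - (\<Sum>S\<in>Pow(C-{j}). c (card S) * V i S)" for j
    by (simp add: shapley_def c_def n_def sum_subtractf right_diff_distrib)
  have B: "(\<Sum>S\<in>Pow(C-{j}). c (card S) * V i (insert j S))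
         = (\<Sum>T\<in>{T\<in>Pow C. j\<in>T}. c (card T - 1) * V i T)" if "j \<in> C" for j
  proof (rule sym, rule sum.reindex_cong[of "insert j"])
    show "inj_on (insert j) (Pow (C - {j}))"
      by (auto simp: inj_on_def)
    show "{T \<in> Pow C. j \<in> T} = insert j ` Pow (C - {j})"
    proof
      show "{T \<in> Pow C. j \<in> T} \<subseteq> insert j ` Pow (C - {j})"
      proof
        fix T assume "T \<in> {T \<in> Pow C. j \<in> T}"
        then have "T = insert j (T - {j})" "T - {j} \<in> Pow (C - {j})" by auto
        then show "T \<in> insert j ` Pow (C - {j})" by blast
      qed
      show "insert j ` Pow (C - {j}) \<subseteq> {T \<in> Pow C. j \<in> T}" using that by auto
    qed
    fix S assume "S \<in> Pow (C - {j})"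
    then have "finite S" "j \<notin> S" using fin finite_subset by auto
    then show "c (card (insert j S) - 1) * V i (insert j S) = c (card S) * V i (insert j S)"
      by simp
  qed
  have Pw: "Pow (C - {j}) = {S\<in>Pow C. j \<notin> S}" for j by auto
  have S1: "(\<Sum>j\<in>C. \<Sum>S\<in>Pow(C-{j}). c (card S) * V i (insert j S))
      = (\<Sum>T\<in>Pow C. real (card T) * c (card T - 1) * V i T)"
  proof -
    have "(\<Sum>j\<in>C. \<Sum>S\<in>Pow(C-{j}). c (card S) * V i (insert j S))
        = (\<Sum>j\<in>C. \<Sum>T\<in>{T\<in>Pow C. j\<in>T}. c (card T - 1) * V i T)"
      using B by simp
    also have "\<dots> = (\<Sum>T\<in>Pow C. \<Sum>j\<in>{j\<in>C. j\<in>T}. c (card T - 1) * V i T)"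
      by (rule sum.swap_restrict) (use fin in auto)
    also have "\<dots> = (\<Sum>T\<in>Pow C. real (card T) * c (card T - 1) * V i T)"
    proof (rule sum.cong)
      fix T assume "T \<in> Pow C"
      then have "{j\<in>C. j\<in>T} = T" by auto
      then show "(\<Sum>j\<in>{j\<in>C. j\<in>T}. c (card T - 1) * V i T) = real (card T) * c (card T - 1) * V i T"
        by simp
    qed simp
    finally show ?thesis .
  qed
  have S2: "(\<Sum>j\<in>C. \<Sum>S\<in>Pow(C-{j}). c (card S) * V i S)
      = (\<Sum>T\<in>Pow C. real (n - card T) * c (card T) * V i T)"
  proof -
    have "(\<Sum>j\<in>C. \<Sum>S\<in>Pow(C-{j}). c (card S) * V i S)
        = (\<Sum>j\<in>C. \<Sum>T\<in>{T\<in>Pow C. j\<notin>T}. c (card T) * V i T)"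
      by (simp only: Pw)
    also have "\<dots> = (\<Sum>T\<in>Pow C. \<Sum>j\<in>{j\<in>C. j\<notin>T}. c (card T) * V i T)"
      by (rule sum.swap_restrict) (use fin in auto)
    also have "\<dots> = (\<Sum>T\<in>Pow C. real (n - card T) * c (card T) * V i T)"
    proof (rule sum.cong)
      fix T assume "T \<in> Pow C"
      then have "{j\<in>C. j\<notin>T} = C - T" "T \<subseteq> C" by auto
      then have "card {j\<in>C. j\<notin>T} = n - card T"
        using fin n_def by (simp add: card_Diff_subset finite_subset)
      then show "(\<Sum>j\<in>{j\<in>C. j\<notin>T}. c (card T) * V i T) = real (n - card T) * c (card T) * V i T"
        by simp
    qed simp
    finally show ?thesis .
  qed
  define d where "d (T::nat set) = real (card T) * c (card T - 1) - real (n - card T) * c (card T)" for T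
  have tot: "(\<Sum>j\<in>C. shapley V i C j) = (\<Sum>T\<in>Pow C. d T * V i T)"
    by (simp add: A sum_subtractf S1 S2 d_def left_diff_distrib)
  have dC: "d C = 1"
  proof -
    have "fact n = real n * fact (n - 1)" by (rule fact_reduce) (use n1 in simp)
    moreover have "fact n > (0::real)" by simp
    ultimately show ?thesis using n1 by (simp add: d_def c_def n_def[symmetric])
  qed
  have d0: "d {} = -1"
  proof -
    have "fact n = real n * fact (n - 1)" by (rule fact_reduce) (use n1 in simp)
    moreover have "fact n > (0::real)" by simp
    ultimately show ?thesis using n1 by (simp add: d_def c_def)
  qed
  have dT: "d T = 0" if "T \<in> Pow C" "T \<noteq> C" "T \<noteq> {}" for T
  proof -
    define t where "t = card T"
    have "finite T" using that fin finite_subset by auto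
    then have t1: "t \<ge> 1" using that t_def by (simp add: Suc_le_eq card_gt_0_iff)
    have "t < n" using that fin t_def n_def by (simp add: psubset_card_mono psubsetI)
    have e1: "fact t = real t * fact (t - 1)" by (rule fact_reduce) (use t1 in simp)
    have e2: "fact (n - t) = real (n - t) * fact (n - t - 1)" by (rule fact_reduce) (use \<open>t < n\<close> in simp)
    have "n - (t - 1) - 1 = n - t" using t1 by simp
    then show ?thesis
      unfolding d_def c_def t_def[symmetric] using e1 e2
      by (simp add: field_simps)
  qed
  have "(\<Sum>T\<in>Pow C. d T * V i T) = (\<Sum>T\<in>{C, {}}. d T * V i T)"
    by (rule sum.mono_neutral_right) (use fin dT in auto)
  also have "\<dots> = V i C - V i {}" using False dC d0 by simp
  finally show ?thesis using tot by simp
qed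

lemma MU_eq:
  assumes "finite C" "j \<in> C"
  shows "MU V i C j = V i C - V i (C - {j})"
proof -
  have "MU V i C j = (\<Sum>g\<in>C. shapley V i C g) - (\<Sum>g\<in>C - {j}. shapley V i (C - {j}) g)"
    unfolding MU_def using assms by (simp add: sum_subtractf sum.remove)
  then show ?thesis using assms by (simp add: shapley_eff)
qed

lemma coalition_upd:
  assumes "j \<in> {1..N}"
  shows "coalition N (s(j:=t)) i = (if i = t then insert j (coalition N s i) else coalition N s i - {j})"
  using assms unfolding coalition_def by auto

definition Phi :: "nat \<Rightarrow> nat \<Rightarrow> (nat \<Rightarrow> nat set \<Rightarrow> real) \<Rightarrow> (nat \<Rightarrow> nat) \<Rightarrow> real" where
  "Phi M N V s = (\<Sum>i\<in>{1..M}. V i (coalition N s i))"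

lemma step:
  assumes sp: "s \<in> profiles M N" and sw: "improving_switch M N V s s'"
  shows "s' \<in> profiles M N \<and> Phi M N V s < Phi M N V s'"
proof -
  obtain j t where j: "j \<in> {1..N}" and t: "t \<in> {1..M}" and tne: "t \<noteq> s j"
    and s': "s' = s(j := t)"
    and imp: "MU V t (coalition N s t \<union> {j}) j > MU V (s j) (coalition N s (s j)) j"
    using sw unfolding improving_switch_def by blast
  define a where "a = s j"
  have a: "a \<in> {1..M}" using sp j unfolding profiles_def a_def by auto
  have s'p: "s' \<in> profiles M N" using sp j t unfolding profiles_def s' by (auto simp: PiE_def extensional_def)
  have fin: "finite (coalition N s i)" for i unfolding coalition_def by simp
  have jnt: "j \<notin> coalition N s t" using tne unfolding coalition_def by auto
  have ja: "j \<in> coalition N s a" using j unfolding coalition_def a_def by auto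
  have MU1: "MU V t (coalition N s t \<union> {j}) j = V t (insert j (coalition N s t)) - V t (coalition N s t)"
    using MU_eq[of "coalition N s t \<union> {j}" j V t] fin jnt by simp
  have MU2: "MU V a (coalition N s a) j = V a (coalition N s a) - V a (coalition N s a - {j})"
    using MU_eq[of "coalition N s a" j V a] fin ja by simp
  have cu: "coalition N s' i = (if i = t then insert j (coalition N s i) else coalition N s i - {j})" for i
    using coalition_upd[OF j] s' by simp
  have other: "coalition N s' i = coalition N s i" if "i \<noteq> t" "i \<noteq> a" for i
    using cu that unfolding coalition_def a_def by auto
  have at: "a \<noteq> t" using tne a_def by simp
  have fM: "finite {1..M}" by simp
  have split: "(\<Sum>i\<in>{1..M}. f i) = f t + (f a + (\<Sum>i\<in>{1..M}-{t}-{a}. f i))" for f :: "nat \<Rightarrow> real"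
  proof -
    have "(\<Sum>i\<in>{1..M}. f i) = f t + (\<Sum>i\<in>{1..M}-{t}. f i)" by (rule sum.remove[OF fM t])
    moreover have "(\<Sum>i\<in>{1..M}-{t}. f i) = f a + (\<Sum>i\<in>{1..M}-{t}-{a}. f i)"
      by (rule sum.remove) (use a at in auto)
    ultimately show ?thesis by simp
  qed
  have "Phi M N V s' = V t (coalition N s' t) + (V a (coalition N s' a) + (\<Sum>i\<in>{1..M}-{t}-{a}. V i (coalition N s' i)))"
    unfolding Phi_def by (rule split)
  moreover have "Phi M N V s = V t (coalition N s t) + (V a (coalition N s a) + (\<Sum>i\<in>{1..M}-{t}-{a}. V i (coalition N s i)))"
    unfolding Phi_def by (rule split)
  moreover have "(\<Sum>i\<in>{1..M}-{t}-{a}. V i (coalition N s' i)) = (\<Sum>i\<in>{1..M}-{t}-{a}. V i (coalition N s i))"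
    by (rule sum.cong) (auto simp: other)
  ultimately show ?thesis using s'p imp MU1 MU2 cu at unfolding a_def by simp
qed

theorem theorem4p6:
  fixes M N :: nat and V :: "nat \<Rightarrow> nat set \<Rightarrow> real"
  assumes "\<forall>i\<in>{1..M}. V i {} = 0"
  shows "\<not> (\<exists>seq :: nat \<Rightarrow> (nat \<Rightarrow> nat).
             seq 0 \<in> profiles M N \<and>
             (\<forall>k. improving_switch M N V (seq k) (seq (Suc k))))"
proof
  assume "\<exists>seq :: nat \<Rightarrow> (nat \<Rightarrow> nat). seq 0 \<in> profiles M N \<and>
             (\<forall>k. improving_switch M N V (seq k) (seq (Suc k)))"
  then obtain seq :: "nat \<Rightarrow> (nat \<Rightarrow> nat)" where s0: "seq 0 \<in> profiles M N"
    and sw: "\<And>k. improving_switch M N V (seq k) (seq (Suc k))" by blast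
  have P: "seq k \<in> profiles M N" for k
    by (induction k) (use s0 step[OF _ sw] in blast)+
  have lt: "Phi M N V (seq k) < Phi M N V (seq (Suc k))" for k
    using step[OF P sw] by simp
  have sm: "strict_mono (\<lambda>k. Phi M N V (seq k))"
    unfolding strict_mono_Suc_iff using lt by blast
  have "inj seq"
  proof (rule injI)
    fix x y assume "seq x = seq y"
    then have "Phi M N V (seq x) = Phi M N V (seq y)" by simp
    then show "x = y" using strict_mono_eq[OF sm] by blast
  qed
  moreover have "finite (profiles M N)" unfolding profiles_def by (simp add: finite_PiE)
  moreover have "range seq \<subseteq> profiles M N" using P by auto
  ultimately have "finite (UNIV :: nat set)" using finite_subset finite_imageD by metis
  then show False by simp
qed

end
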